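(* Let $T>0$ and let $d_M,d_I:\mathbb{R}\to(0,\infty)$, $D_I:\mathbb{R}\to[0,\infty)$, $\tau:\mathbb{R}\to(0,\infty)$, $p:\mathbb{R}\to[0,\infty)$ be $C^1$ and $T$-periodic, and let $h\in C^1([0,\infty);[0,\infty))$. Assume: (a) there are numbers $0<\alpha\le\beta<t_\alpha\le t_\beta<T$ with $t_\alpha-\tau(t_\alpha)=\alpha$, $t_\beta-\tau(t_\beta)=\beta$, and $p(t)=0$ for $t\in[0,\alpha]\cup[\beta,T]$; (b) $\tau'(t)<1$ for all $t\in\mathbb{R}$; (c) $h(0)=0$, $\lim_{z\to+\infty}h(z)=0$, and there is $z^*>0$ such that $h$ is increasing on $[0,z^* )$ and decreasing on $[z^*,+\infty)$; (d) $h(\lambda z)\ge\lambda h(z)$ for all $z\ge0$, $\lambda\in(0,1)$. Define $\overline{k}_M(t,s)=e^{-\int_s^t d_M(\omega)d\omega}$, $\varepsilon(s)=e^{-\int_{s-\tau(s)}^{s}d_I(\omega)d\omega}$, $g(s)=(1-\tau'(s))\varepsilon(s)p(s-\tau(s))$, and the map $\overline{Q}:[0,\infty)\to[0,\infty)$, $$\overline{Q}[z]=z\,\overline{k}_M(T,0)+\int_{t_\alpha}^{t_\beta}\overline{k}_M(T,s)\,g(s)\,h\big(z\,\overline{k}_M(s-\tau(s),0)\big)\,ds,$$ and the number $$L=\frac{\overline{k}_M(T,0)}{1-\overline{k}_M(T,0)}\int_{t_\alpha}^{t_\beta}\frac{g(s)h'(0)}{\overline{k}_M(s,s-\tau(s))}\,ds.$$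 Then: (i) If $L>1$, then $\overline{Q}$ admits at least one positive fixed point; denoting the minimal positive fixed point by $u^*$, one has $\lim_{n\to\infty}\overline{Q}^n[u]=u^*$ provided that $u\in(0,u^*]$ and $u^*\,\overline{k}_M(\alpha,0)\le z^*$. (ii) If $L<1$, then $\lim_{n\to\infty}\overline{Q}^n[u]=0$ for every $u\ge0$.
   Context: $\overline{Q}$ is the restriction to constant functions of the yearly (time-$T$) map of the mature-population equation of a stage-structured reaction–diffusion model with periodic maturation delay $\tau(t)$, birth rate $b(t,u)=p(t)h(u)$, breeding season $[\alpha,\beta]$ and maturation season $[t_\alpha,t_\beta]$. $\overline{Q}^n$ denotes the $n$-th iterate. *)

theory Defs
  imports "HOL-Analysis.Analysis"
begin

definition oint :: "real \<Rightarrow> real \<Rightarrow> (real \<Rightarrow> real) \<Rightarrow> real" where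
  "oint a b f = (if a \<le> b then integral {a..b} f else - integral {b..a} f)"

definition kM :: "(real \<Rightarrow> real) \<Rightarrow> real \<Rightarrow> real \<Rightarrow> real" where
  "kM dM t s = exp (- oint s t dM)"

definition epsI :: "(real \<Rightarrow> real) \<Rightarrow> (real \<Rightarrow> real) \<Rightarrow> real \<Rightarrow> real" where
  "epsI dI tau s = exp (- oint (s - tau s) s dI)"

definition gfun :: "(real \<Rightarrow> real) \<Rightarrow> (real \<Rightarrow> real) \<Rightarrow> (real \<Rightarrow> real) \<Rightarrow> (real \<Rightarrow> real) \<Rightarrow> real \<Rightarrow> real" where
  "gfun dI tau tau' p s = (1 - tau' s) * epsI dI tau s * p (s - tau s)"

definition Qbar :: "(real \<Rightarrow> real) \<Rightarrow> (real \<Rightarrow> real) \<Rightarrow> (real \<Rightarrow> real) \<Rightarrow> (real \<Rightarrow> real)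
    \<Rightarrow> (real \<Rightarrow> real) \<Rightarrow> (real \<Rightarrow> real) \<Rightarrow> real \<Rightarrow> real \<Rightarrow> real \<Rightarrow> real \<Rightarrow> real" where
  "Qbar dM dI tau tau' p h T ta tb z =
     z * kM dM T 0 + integral {ta..tb}
       (\<lambda>s. kM dM T s * gfun dI tau tau' p s * h (z * kM dM (s - tau s) 0))"

definition Lnum :: "(real \<Rightarrow> real) \<Rightarrow> (real \<Rightarrow> real) \<Rightarrow> (real \<Rightarrow> real) \<Rightarrow> (real \<Rightarrow> real)
    \<Rightarrow> (real \<Rightarrow> real) \<Rightarrow> real \<Rightarrow> real \<Rightarrow> real \<Rightarrow> real \<Rightarrow> real" where
  "Lnum dM dI tau tau' p h'0 T ta tb =
     kM dM T 0 / (1 - kM dM T 0) *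
       integral {ta..tb} (\<lambda>s. gfun dI tau tau' p s * h'0 / kM dM s (s - tau s))"

end

theory Submission
  imports Defs
begin


lemma iter_to_zero:
  fixes Q :: "real \<Rightarrow> real"
  assumes Qb: "\<forall>z\<ge>0. 0 \<le> Q z \<and> Q z \<le> \<rho> * z" and r: "0 \<le> \<rho>" "\<rho> < 1" and u: "u \<ge> 0"
  shows "(\<lambda>n. (Q^^n) u) \<longlonglongrightarrow> 0"
proof -
  have b: "0 \<le> (Q^^n) u \<and> (Q^^n) u \<le> \<rho>^n * u" for n
  proof (induction n)
    case 0 then show ?case using u by simp
  next
    case (Suc n)
    then have "Q ((Q^^n) u) \<le> \<rho> * (Q^^n) u" "0 \<le> Q ((Q^^n) u)" using Qb by auto
    moreover have "\<rho> * (Q^^n) u \<le> \<rho> * (\<rho>^n * u)" using Suc r by (simp add: mult_left_mono)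
    ultimately show ?case by simp
  qed
  have "(\<lambda>n. \<rho>^n * u) \<longlonglongrightarrow> 0"
    by (intro tendsto_mult_left_zero LIMSEQ_power_zero) (use r in auto)
  moreover have e1: "eventually (\<lambda>n. 0 \<le> (Q^^n) u) sequentially" using b by simp
  moreover have e2: "eventually (\<lambda>n. (Q^^n) u \<le> \<rho>^n * u) sequentially" using b by simp
  ultimately show ?thesis by (intro tendsto_sandwich[OF e1 e2 tendsto_const])
qed

lemma fixpoint_exist:
  fixes Q :: "real \<Rightarrow> real"
  assumes cont: "continuous_on {0..} Q"
    and d: "\<delta> > 0" "\<forall>z. 0 < z \<and> z \<le> \<delta> \<longrightarrow> Q z > z"
    and z1: "z1 > 0" "Q z1 < z1"
  shows "\<exists>us>0. Q us = us \<and> (\<forall>v>0. Q v = v \<longrightarrow> us \<le> v) \<and> (\<forall>z. 0<z \<and> z<us \<longrightarrow> Q z > z)"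
proof -
  define S where "S = {v \<in> {\<delta>..}. (\<lambda>v. Q v - v) v = 0}"
  have c2: "continuous_on {\<delta>..} (\<lambda>v. Q v - v)"
    by (intro continuous_intros continuous_on_subset[OF cont]) (use d in auto)
  have clS: "closed S" unfolding S_def
    by (rule continuous_closed_preimage_constant[OF c2]) simp
  have fix_in: "\<exists>x. \<delta> \<le> x \<and> x \<le> z \<and> Q x = x" if "\<delta> \<le> z" "Q z \<le> z" for z
  proof -
    have "continuous_on {\<delta>..z} (\<lambda>v. Q v - v)" by (rule continuous_on_subset[OF c2]) auto
    moreover have "Q \<delta> - \<delta> \<ge> 0" using d by force
    ultimately have "\<exists>x\<ge>\<delta>. x \<le> z \<and> Q x - x = 0"
      using that by (intro IVT2') auto
    then obtain x where "x \<ge> \<delta>" "x \<le> z" "Q x - x = 0" by auto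
    then show ?thesis by auto
  qed
  have "\<delta> \<le> z1" using d z1 by force
  from fix_in[OF this] z1 obtain x where x: "x \<in> S" unfolding S_def by force
  have bb: "bdd_below S" unfolding S_def by (rule bdd_belowI[of _ \<delta>]) auto
  define us where "us = Inf S"
  have usS: "us \<in> S" unfolding us_def using closed_contains_Inf[OF _ bb clS] x by auto
  have min: "us \<le> v" if "v>0" "Q v = v" for v
  proof -
    have "v > \<delta>" using d that by (metis less_irrefl not_le)
    then have "v \<in> S" using that unfolding S_def by auto
    then show ?thesis unfolding us_def using bb by (simp add: cInf_lower)
  qed
  have gt: "Q z > z" if "0<z" "z<us" for z
  proof (rule ccontr)
    assume n: "\<not> Q z > z"
    then have "z > \<delta>" using d that by force
    then have "\<exists>y\<ge>\<delta>. y \<le> z \<and> Q y = y" using fix_in[of z] n by simp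
    then obtain y where "\<delta> \<le> y" "y \<le> z" "Q y = y" by blast
    then have "us \<le> y" using min d by auto
    then show False using that \<open>y \<le> z\<close> by auto
  qed
  show ?thesis using usS min gt d unfolding S_def by (intro exI[of _ us]) auto
qed

lemma conv_to_us:
  fixes Q :: "real \<Rightarrow> real"
  assumes cont: "continuous_on {0..} Q" and us: "us > 0" "Q us = us"
   and gt: "\<forall>z. 0<z \<and> z<us \<longrightarrow> Q z > z"
   and mono: "\<forall>x y. 0 \<le> x \<and> x \<le> y \<and> y \<le> us \<longrightarrow> Q x \<le> Q y"
   and u: "0 < u" "u \<le> us"
  shows "(\<lambda>n. (Q^^n) u) \<longlonglongrightarrow> us"
proof -
  define X where "X n = (Q^^n) u" for n
  have P: "u \<le> X n \<and> X n \<le> us" for n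
  proof (induction n)
    case 0 then show ?case using u by (simp add: X_def)
  next
    case (Suc n)
    have e: "X (Suc n) = Q (X n)" by (simp add: X_def)
    have "Q (X n) \<le> Q us" using mono Suc u by auto
    moreover have "Q (X n) \<ge> X n"
    proof (cases "X n < us")
      case True then show ?thesis using gt[rule_format, of "X n"] Suc u by linarith
    next
      case False then show ?thesis using Suc us by auto
    qed
    ultimately show ?case using Suc us e by auto
  qed
  have step: "X n \<le> X (Suc n)" for n
  proof (cases "X n < us")
    case True then show ?thesis using gt[rule_format, of "X n"] P[of n] u by (simp add: X_def)
  next
    case False then show ?thesis using P[of n] us by (auto simp: X_def)
  qed
  have inc: "incseq X" by (rule incseq_SucI) (use step in auto)
  have bdd: "bdd_above (range X)" using P by (intro bdd_aboveI[of _ us]) auto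
  define l where "l = (SUP i. X i)"
  have lim: "X \<longlonglongrightarrow> l" unfolding l_def by (rule LIMSEQ_incseq_SUP[OF bdd inc])
  have lu: "u \<le> l" "l \<le> us"
    using LIMSEQ_le_const[OF lim, of u] LIMSEQ_le_const2[OF lim, of us] P by auto
  have "(\<lambda>n. Q (X n)) \<longlonglongrightarrow> Q l"
  proof (rule continuous_on_tendsto_compose[OF cont lim])
    have "0 \<le> X n" for n using P[of n] u by linarith
    then show "\<forall>\<^sub>F n in sequentially. X n \<in> {0..}" by simp
  qed (use lu u in auto)
  moreover have "(\<lambda>n. Q (X n)) \<longlonglongrightarrow> l"
    using LIMSEQ_Suc[OF lim] by (simp add: X_def)
  ultimately have "Q l = l" using LIMSEQ_unique by blast
  then have "l = us" using gt[rule_format, of l] lu u by linarith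
  then show ?thesis using lim unfolding X_def by simp
qed



lemma oint_add:
  assumes f: "continuous_on UNIV f"
  shows "oint a b f + oint b c f = oint a c f"
proof -
  have I: "f integrable_on {x..y}" for x y
    by (rule integrable_continuous_real) (rule continuous_on_subset[OF f], simp)
  have C: "x \<le> y \<Longrightarrow> y \<le> z \<Longrightarrow> integral {x..y} f + integral {y..z} f = integral {x..z} f" for x y z
    using Henstock_Kurzweil_Integration.integral_combine[OF _ _ I] by blast
  consider "a \<le> b" "b \<le> c" | "a \<le> c" "c \<le> b" | "b \<le> a" "a \<le> c"
    | "b \<le> c" "c \<le> a" | "c \<le> a" "a \<le> b" | "c \<le> b" "b \<le> a" by linarith
  then show ?thesis
  proof cases
    case 1 then show ?thesis using C[of a b c] unfolding oint_def by simp
  next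
    case 2 then show ?thesis using C[of a c b] unfolding oint_def by (cases "a = b"; cases "b=c") auto
  next
    case 3 then show ?thesis using C[of b a c] unfolding oint_def by (cases "a = b"; cases "b=c") auto
  next
    case 4 then show ?thesis using C[of b c a] unfolding oint_def by (cases "a = b"; cases "a=c") auto
  next
    case 5 then show ?thesis using C[of c a b] unfolding oint_def by (cases "a = b"; cases "a=c") auto
  next
    case 6 then show ?thesis using C[of c b a] unfolding oint_def by (cases "a = b"; cases "b=c") auto
  qed
qed

lemma oint_split:
  assumes f: "continuous_on UNIV f"
  shows "oint a b f = oint 0 b f - oint 0 a f"
  using oint_add[OF f, of 0 a b] by simp

lemma oint_deriv:
  assumes f: "continuous_on UNIV f"
  shows "((\<lambda>x. oint 0 x f) has_real_derivative f x) (at x)"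
proof -
  define a where "a = -(\<bar>x\<bar> + 1)"
  define b where "b = \<bar>x\<bar> + 1"
  have x: "x \<in> {a<..<b}" unfolding a_def b_def by auto
  have eq: "oint 0 y f = integral {a..y} f - integral {a..0} f" if "y \<in> {a<..<b}" for y
  proof -
    have "oint a 0 f + oint 0 y f = oint a y f" by (rule oint_add[OF f])
    moreover have "a \<le> 0" "a \<le> y" using that unfolding a_def by auto
    ultimately show ?thesis unfolding oint_def by auto
  qed
  have d0: "((\<lambda>y. integral {a..y} f) has_real_derivative f x) (at x within {a..b})"
    by (rule integral_has_real_derivative) (use continuous_on_subset[OF f] x in auto)
  have d1: "((\<lambda>y. integral {a..y} f) has_real_derivative f x) (at x within {a<..<b})"
    by (rule DERIV_subset[OF d0]) auto
  have "((\<lambda>y. integral {a..y} f - integral {a..0} f) has_real_derivative f x - 0) (at x within {a<..<b})"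
    by (rule DERIV_diff[OF d1 DERIV_const])
  then have "((\<lambda>y. integral {a..y} f - integral {a..0} f) has_real_derivative f x) (at x within {a<..<b})"
    by simp
  then have "((\<lambda>y. integral {a..y} f - integral {a..0} f) has_real_derivative f x) (at x)"
    using at_within_open[OF x] by simp
  then show ?thesis
    by (rule has_field_derivative_transform_within_open[OF _ _ x]) (use eq in auto)
qed

lemma oint_00[simp]: "oint a a f = 0" by (simp add: oint_def)



lemma h_cont:
  assumes "\<forall>z\<ge>0. (h has_real_derivative h' z) (at z within {0..})"
  shows "continuous_on {0..} (h::real\<Rightarrow>real)"
  unfolding continuous_on_eq_continuous_within
proof
  fix x :: real assume "x \<in> {0..}"
  then show "continuous (at x within {0..}) h" by (intro DERIV_continuous[OF assms[rule_format]]) simp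
qed

lemma h_ratio_mono:
  fixes h :: "real \<Rightarrow> real"
  assumes sub: "\<forall>z\<ge>0. \<forall>l. 0 < l \<and> l < 1 \<longrightarrow> h (l * z) \<ge> l * h z"
    and "0 < y" "y \<le> z"
  shows "h z / z \<le> h y / y"
proof (cases "y = z")
  case False
  then have l: "0 < y / z" "y / z < 1" using assms by auto
  have "h ((y/z) * z) \<ge> (y/z) * h z" using sub[rule_format, of z "y/z"] l assms by linarith
  then have hy: "h y \<ge> (y/z) * h z" using assms by simp
  have m: "((y/z) * h z) / y \<le> h y / y" by (rule divide_right_mono[OF hy]) (use assms in simp)
  have eq: "((y/z) * h z) / y = h z / z" using assms by (simp add: field_simps)
  show ?thesis using m unfolding eq .
qed simp

lemma h_quot_lim:
  fixes h :: "real \<Rightarrow> real"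
  assumes der: "\<forall>z\<ge>0. (h has_real_derivative h' z) (at z within {0..})" and h0: "h 0 = 0"
  shows "((\<lambda>y. h y / y) \<longlongrightarrow> h' 0) (at_right 0)"
  using der[rule_format, of 0] h0 unfolding has_field_derivative_iff at_within_Ici_at_right by simp

lemma h_lin:
  fixes h :: "real \<Rightarrow> real"
  assumes der: "\<forall>z\<ge>0. (h has_real_derivative h' z) (at z within {0..})" and h0: "h 0 = 0"
    and sub: "\<forall>z\<ge>0. \<forall>l. 0 < l \<and> l < 1 \<longrightarrow> h (l * z) \<ge> l * h z"
    and z: "z \<ge> 0"
  shows "h z \<le> h' 0 * z"
proof (cases "z = 0")
  case True then show ?thesis using h0 by simp
next
  case False
  then have zp: "z > 0" using z by simp
  have "h z / z \<le> h' 0"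
  proof (rule tendsto_lowerbound[OF h_quot_lim[OF der h0]])
    show "\<forall>\<^sub>F y in at_right 0. h z / z \<le> h y / y"
      unfolding eventually_at_right_field using zp h_ratio_mono[OF sub]
      by (intro exI[of _ z]) auto
  qed simp
  then show ?thesis using zp by (simp add: field_simps)
qed

lemma h_small:
  fixes h :: "real \<Rightarrow> real"
  assumes der: "\<forall>z\<ge>0. (h has_real_derivative h' z) (at z within {0..})" and h0: "h 0 = 0"
    and A: "A < h' 0"
  shows "\<exists>\<delta>>0. h \<delta> / \<delta> > A"
proof -
  have "\<forall>\<^sub>F y in at_right 0. h y / y > A"
    using order_tendstoD(1)[OF h_quot_lim[OF der h0] A] .
  then obtain b where b: "b > 0" "\<forall>y>0. y < b \<longrightarrow> h y / y > A"
    unfolding eventually_at_right_field by auto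
  have "b/2 > 0" "b/2 < b" using b by auto
  then have "A < h (b/2) / (b/2)" using b(2) by blast
  then show ?thesis using \<open>b>0\<close> by (intro exI[of _ "b/2"]) auto
qed

lemma h_mono_le:
  fixes h :: "real \<Rightarrow> real"
  assumes cont: "continuous_on {0..} h" and inc: "monotone_on {0..<zs} (<) (<) h"
    and xy: "0 \<le> x" "x \<le> y" "y \<le> zs"
  shows "h x \<le> h y"
proof (cases "x = y")
  case True then show ?thesis by simp
next
  case False
  then have xy': "x < y" using xy by simp
  have lt: "h x < h t" if "x < t" "t < zs" for t
    using inc xy that unfolding monotone_on_def by auto
  show ?thesis
  proof (cases "y < zs")
    case True then show ?thesis using lt xy' by fastforce
  next
    case False
    then have yz: "y = zs" using xy by simp
    have "continuous_on {x..zs} h" by (rule continuous_on_subset[OF cont]) (use xy in auto)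
    then have "(h \<longlongrightarrow> h zs) (at zs within {x..zs})"
      using xy' yz unfolding continuous_on_def by auto
    then have L: "(h \<longlongrightarrow> h zs) (at_left zs)" using at_within_Icc_at_left[of x zs] xy' yz by simp
    have "h x \<le> h zs"
    proof (rule tendsto_lowerbound[OF L])
      show "\<forall>\<^sub>F t in at_left zs. h x \<le> h t"
        unfolding eventually_at_left_field using lt xy' yz
        by (intro exI[of _ x]) (auto intro: less_imp_le)
    qed simp
    then show ?thesis using yz by simp
  qed
qed

lemma h_bound:
  fixes h :: "real \<Rightarrow> real"
  assumes cont: "continuous_on {0..} h" and inc: "monotone_on {0..<zs} (<) (<) h"
    and dec: "monotone_on {zs..} (<) (>) h" and zs: "zs > 0" and y: "0 \<le> y"
  shows "h y \<le> h zs"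
proof (cases "y \<le> zs")
  case True then show ?thesis using h_mono_le[OF cont inc y True] by simp
next
  case False then show ?thesis using dec[unfolded monotone_on_def, rule_format, of zs y] zs by simp
qed



theorem theorem3p1:
  fixes T \<alpha> \<beta> t\<^sub>\<alpha> t\<^sub>\<beta> zs :: real
    and dM dI DI tau tau' p h h' :: "real \<Rightarrow> real"
  assumes T_pos: "T > 0"
    and dM_C1: "dM C1_differentiable_on UNIV" and dM_pos: "\<forall>t. dM t > 0"
    and dI_C1: "dI C1_differentiable_on UNIV" and dI_pos: "\<forall>t. dI t > 0"
    and DI_C1: "DI C1_differentiable_on UNIV" and DI_nonneg: "\<forall>t. DI t \<ge> 0"
    and tau_deriv: "\<forall>t. (tau has_real_derivative tau' t) (at t)"
    and tau'_cont: "continuous_on UNIV tau'" and tau_pos: "\<forall>t. tau t > 0"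
    and p_C1: "p C1_differentiable_on UNIV" and p_nonneg: "\<forall>t. p t \<ge> 0"
    and periodic: "\<forall>t. dM (t + T) = dM t \<and> dI (t + T) = dI t \<and> DI (t + T) = DI t
                      \<and> tau (t + T) = tau t \<and> p (t + T) = p t"
    and h_deriv: "\<forall>z\<ge>0. (h has_real_derivative h' z) (at z within {0..})"
    and h'_cont: "continuous_on {0..} h'"
    and h_nonneg: "\<forall>z\<ge>0. h z \<ge> 0"
    and a_order: "0 < \<alpha>" "\<alpha> \<le> \<beta>" "\<beta> < t\<^sub>\<alpha>" "t\<^sub>\<alpha> \<le> t\<^sub>\<beta>" "t\<^sub>\<beta> < T"
    and a_ta: "t\<^sub>\<alpha> - tau t\<^sub>\<alpha> = \<alpha>" and a_tb: "t\<^sub>\<beta> - tau t\<^sub>\<beta> = \<beta>"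
    and a_p: "\<forall>t \<in> {0..\<alpha>} \<union> {\<beta>..T}. p t = 0"
    and b_tau': "\<forall>t. tau' t < 1"
    and c_h0: "h 0 = 0" and c_lim: "(h \<longlongrightarrow> 0) at_top"
    and c_zs: "zs > 0"
    and c_inc: "monotone_on {0..<zs} (<) (<) h"
    and c_dec: "monotone_on {zs..} (<) (>) h"
    and d_subhom: "\<forall>z\<ge>0. \<forall>l. 0 < l \<and> l < 1 \<longrightarrow> h (l * z) \<ge> l * h z"
  shows "(Lnum dM dI tau tau' p (h' 0) T t\<^sub>\<alpha> t\<^sub>\<beta> > 1 \<longrightarrow>
            (\<exists>ustar. ustar > 0 \<and> Qbar dM dI tau tau' p h T t\<^sub>\<alpha> t\<^sub>\<beta> ustar = ustar
               \<and> (\<forall>v>0. Qbar dM dI tau tau' p h T t\<^sub>\<alpha> t\<^sub>\<beta> v = v \<longrightarrow> ustar \<le> v)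
               \<and> (\<forall>u. 0 < u \<and> u \<le> ustar \<and> ustar * kM dM \<alpha> 0 \<le> zs \<longrightarrow>
                    (\<lambda>n. (Qbar dM dI tau tau' p h T t\<^sub>\<alpha> t\<^sub>\<beta> ^^ n) u) \<longlonglongrightarrow> ustar)))
       \<and> (Lnum dM dI tau tau' p (h' 0) T t\<^sub>\<alpha> t\<^sub>\<beta> < 1 \<longrightarrow>
            (\<forall>u\<ge>0. (\<lambda>n. (Qbar dM dI tau tau' p h T t\<^sub>\<alpha> t\<^sub>\<beta> ^^ n) u) \<longlonglongrightarrow> 0))"
proof -
  note [[simproc del: let_simp]]
  have dMc: "continuous_on UNIV dM" by (rule C1_differentiable_imp_continuous_on[OF dM_C1])
  have dIc: "continuous_on UNIV dI" by (rule C1_differentiable_imp_continuous_on[OF dI_C1])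
  have pc: "continuous_on UNIV p" by (rule C1_differentiable_imp_continuous_on[OF p_C1])
  have tauc: "continuous_on UNIV tau"
    by (rule DERIV_continuous_on[of UNIV tau tau']) (use tau_deriv in auto)
  define G where "G x = oint 0 x dM" for x
  define GI where "GI x = oint 0 x dI" for x
  have Gd: "(G has_real_derivative dM x) (at x)" for x unfolding G_def by (rule oint_deriv[OF dMc])
  have GId: "(GI has_real_derivative dI x) (at x)" for x unfolding GI_def by (rule oint_deriv[OF dIc])
  have Gc: "continuous_on UNIV G"
    by (rule DERIV_continuous_on[of UNIV G dM]) (use Gd in auto)
  have GIc: "continuous_on UNIV GI"
    by (rule DERIV_continuous_on[of UNIV GI dI]) (use GId in auto)
  have kM_eq: "kM dM t s = exp (G s - G t)" for t s
    unfolding kM_def G_def using oint_split[OF dMc, of s t] by simp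
  have eps_eq: "epsI dI tau s = exp (GI (s - tau s) - GI s)" for s
    unfolding epsI_def GI_def using oint_split[OF dIc, of "s - tau s" s] by simp
  have G0: "G 0 = 0" unfolding G_def by simp
  have Gmono: "G a < G b" if "a < b" for a b
  proof (rule DERIV_pos_imp_increasing[OF that])
    fix x show "\<exists>y. (G has_real_derivative y) (at x) \<and> 0 < y"
      using Gd[of x] dM_pos by blast
  qed
  have Gmono': "G a \<le> G b" if "a \<le> b" for a b
    using Gmono that by (cases "a = b") (auto intro: less_imp_le)
  define k where "k = kM dM T 0"
  have k_eq: "k = exp (- G T)" unfolding k_def kM_eq G0 by simp
  have k0: "0 < k" unfolding k_eq by simp
  have k1: "k < 1" unfolding k_eq using Gmono[OF T_pos] G0 by simp
  define c where "c s = kM dM (s - tau s) 0" for s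
  have c_eq: "c s = exp (- G (s - tau s))" for s unfolding c_def kM_eq G0 by simp
  have sd: "((\<lambda>s. s - tau s) has_real_derivative 1 - tau' x) (at x)" for x
    using tau_deriv by (auto intro!: derivative_eq_intros)
  have salpha: "s - tau s \<ge> \<alpha>" if "t\<^sub>\<alpha> \<le> s" for s
  proof -
    have "t\<^sub>\<alpha> - tau t\<^sub>\<alpha> \<le> s - tau s"
    proof (rule DERIV_nonneg_imp_nondecreasing[OF that])
      fix x show "\<exists>y. ((\<lambda>s. s - tau s) has_real_derivative y) (at x) \<and> 0 \<le> y"
        using sd[of x] b_tau'[rule_format, of x] by (intro exI[of _ "1 - tau' x"]) simp
    qed
    then show ?thesis using a_ta by simp
  qed
  have c_pos: "0 < c s" for s unfolding c_eq by simp
  have c_lt1: "c s < 1" if "t\<^sub>\<alpha> \<le> s" for s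
  proof -
    have "G 0 < G (s - tau s)" using Gmono salpha[OF that] a_order(1) by force
    then show ?thesis unfolding c_eq G0 by simp
  qed
  have c_le_alpha: "c s \<le> kM dM \<alpha> 0" if "t\<^sub>\<alpha> \<le> s" for s
    unfolding c_eq kM_eq G0 using Gmono'[OF salpha[OF that]] by simp
  have comp: "continuous_on UNIV f \<Longrightarrow> continuous_on S g' \<Longrightarrow> continuous_on S (\<lambda>x. f (g' x))"
    for f :: "real \<Rightarrow> real" and S and g' :: "'z::topological_space \<Rightarrow> real"
    by (metis continuous_on_compose2 subset_UNIV)
  have sc: "continuous_on UNIV (\<lambda>s. s - tau s)" by (intro continuous_intros tauc)
  have kTc: "continuous_on UNIV (\<lambda>s. kM dM T s)"
    unfolding kM_eq by (intro continuous_intros comp[OF Gc])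
  have cc: "continuous_on UNIV c"
    unfolding c_eq by (intro continuous_intros comp[OF Gc] sc)
  have gc: "continuous_on UNIV (gfun dI tau tau' p)"
    unfolding gfun_def[abs_def] eps_eq
    by (intro continuous_intros comp[OF GIc] comp[OF pc] sc tau'_cont)
  have g_nn: "0 \<le> gfun dI tau tau' p s" for s
    unfolding gfun_def epsI_def using b_tau'[rule_format, of s] p_nonneg by (intro mult_nonneg_nonneg) auto
  have kT_pos: "0 < kM dM T s" for s unfolding kM_def by simp
  have hc: "continuous_on {0..} h" by (rule h_cont[OF h_deriv])
  define F where "F z s = kM dM T s * gfun dI tau tau' p s * h (z * c s)" for z s
  define Q where "Q = Qbar dM dI tau tau' p h T t\<^sub>\<alpha> t\<^sub>\<beta>"
  have Q_eq: "Q z = z * k + integral {t\<^sub>\<alpha>..t\<^sub>\<beta>} (F z)" for z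
    unfolding Q_def Qbar_def F_def k_def c_def by simp
  have Fc: "continuous_on ({0..} \<times> {t\<^sub>\<alpha>..t\<^sub>\<beta>}) (\<lambda>(z, s). F z s)"
  proof -
    have "continuous_on ({0..} \<times> {t\<^sub>\<alpha>..t\<^sub>\<beta>}) (\<lambda>x. h (fst x * c (snd x)))"
      by (rule continuous_on_compose2[OF hc])
        (auto intro!: continuous_intros comp[OF cc] simp: c_pos less_imp_le)
    then have "continuous_on ({0..} \<times> {t\<^sub>\<alpha>..t\<^sub>\<beta>})
       (\<lambda>x. kM dM T (snd x) * gfun dI tau tau' p (snd x) * h (fst x * c (snd x)))"
      by (intro continuous_intros comp[OF kTc] comp[OF gc])
    then show ?thesis unfolding F_def split_beta .
  qed
  have Fi: "F z integrable_on {t\<^sub>\<alpha>..t\<^sub>\<beta>}" if "z \<ge> 0" for z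
  proof (rule integrable_continuous_interval)
    show "continuous_on {t\<^sub>\<alpha>..t\<^sub>\<beta>} (F z)"
      by (rule continuous_on_compose2[OF Fc, of _ "\<lambda>s. (z, s)", simplified])
        (auto intro!: continuous_intros simp: that)
  qed
  have Qc: "continuous_on {0..} Q"
  proof -
    have "continuous_on {0..} (\<lambda>z. integral (cbox t\<^sub>\<alpha> t\<^sub>\<beta>) (F z))"
      by (rule integral_continuous_on_param) (use Fc in simp)
    then show ?thesis unfolding Q_eq[abs_def] by (intro continuous_intros) simp
  qed
  define w where "w s = kM dM T s * gfun dI tau tau' p s * c s" for s
  define W where "W = integral {t\<^sub>\<alpha>..t\<^sub>\<beta>} w"
  define B where "B = integral {t\<^sub>\<alpha>..t\<^sub>\<beta>} (\<lambda>s. kM dM T s * gfun dI tau tau' p s)"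
  have wc: "continuous_on UNIV w" unfolding w_def[abs_def] by (intro continuous_intros kTc gc cc)
  have wi: "w integrable_on {t\<^sub>\<alpha>..t\<^sub>\<beta>}" by (rule integrable_continuous_interval) (rule continuous_on_subset[OF wc], simp)
  have Bi: "(\<lambda>s. kM dM T s * gfun dI tau tau' p s) integrable_on {t\<^sub>\<alpha>..t\<^sub>\<beta>}"
    by (rule integrable_continuous_interval) (intro continuous_intros continuous_on_subset[OF kTc] continuous_on_subset[OF gc]; simp)
  have w_nn: "0 \<le> w s" for s unfolding w_def using kT_pos g_nn c_pos by (simp add: less_imp_le)
  have W_nn: "0 \<le> W" unfolding W_def by (rule integral_nonneg[OF wi]) (use w_nn in auto)
  have B_nn: "0 \<le> B" unfolding B_def by (rule integral_nonneg[OF Bi]) (use kT_pos g_nn in \<open>auto simp: less_imp_le\<close>)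
  have h0_nn: "0 \<le> h' 0" using h_lin[OF h_deriv c_h0 d_subhom, of 1] h_nonneg[rule_format, of 1] by simp
  have L_eq: "Lnum dM dI tau tau' p (h' 0) T t\<^sub>\<alpha> t\<^sub>\<beta> = h' 0 * W / (1 - k)"
  proof -
    have pt: "gfun dI tau tau' p s * h' 0 / kM dM s (s - tau s) = w s * h' 0 / k" for s
    proof -
      have "kM dM T s * c s * kM dM s (s - tau s) = k"
        unfolding kM_eq c_eq k_eq by (simp flip: exp_add)
      moreover have "kM dM s (s - tau s) > 0" unfolding kM_def by simp
      ultimately show ?thesis unfolding w_def using k0 kT_pos[of s] c_pos[of s]
        by (simp add: field_simps)
    qed
    have "integral {t\<^sub>\<alpha>..t\<^sub>\<beta>} (\<lambda>s. gfun dI tau tau' p s * h' 0 / kM dM s (s - tau s)) = W * h' 0 / k"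
      unfolding pt W_def by simp
    then show ?thesis unfolding Lnum_def k_def[symmetric] using k0 by simp
  qed
  have F_nn: "0 \<le> F z s" if "z \<ge> 0" for z s
    unfolding F_def using kT_pos g_nn h_nonneg that c_pos by (simp add: less_imp_le)
  have Q_nn: "0 \<le> Q z" if "z \<ge> 0" for z
    unfolding Q_eq using integral_nonneg[OF Fi[OF that] F_nn[OF that]] that k0 by simp
  have Q_up1: "Q z \<le> (k + h' 0 * W) * z" if "z \<ge> 0" for z
  proof -
    have "integral {t\<^sub>\<alpha>..t\<^sub>\<beta>} (F z) \<le> integral {t\<^sub>\<alpha>..t\<^sub>\<beta>} (\<lambda>s. (h' 0 * z) * w s)"
    proof (rule integral_le[OF Fi[OF that]])
      show "(\<lambda>s. (h' 0 * z) * w s) integrable_on {t\<^sub>\<alpha>..t\<^sub>\<beta>}" using integrable_on_cmult_left[OF wi, of "h' 0 * z"] by simp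
      fix s
      have "h (z * c s) \<le> h' 0 * (z * c s)"
        by (rule h_lin[OF h_deriv c_h0 d_subhom]) (use that c_pos in \<open>simp add: less_imp_le\<close>)
      then have "kM dM T s * gfun dI tau tau' p s * h (z * c s) \<le> kM dM T s * gfun dI tau tau' p s * (h' 0 * (z * c s))"
        using kT_pos g_nn by (simp add: mult_left_mono less_imp_le)
      then show "F z s \<le> (h' 0 * z) * w s" unfolding F_def w_def by (simp add: ac_simps)
    qed
    also have "\<dots> = h' 0 * z * W" unfolding W_def by simp
    finally show ?thesis unfolding Q_eq by (simp add: algebra_simps)
  qed
  have Q_up2: "Q z \<le> z * k + h zs * B" if "z \<ge> 0" for z
  proof -
    have "integral {t\<^sub>\<alpha>..t\<^sub>\<beta>} (F z) \<le> integral {t\<^sub>\<alpha>..t\<^sub>\<beta>} (\<lambda>s. h zs * (kM dM T s * gfun dI tau tau' p s))"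
    proof (rule integral_le[OF Fi[OF that]])
      show "(\<lambda>s. h zs * (kM dM T s * gfun dI tau tau' p s)) integrable_on {t\<^sub>\<alpha>..t\<^sub>\<beta>}" using integrable_on_cmult_left[OF Bi, of "h zs"] by simp
      fix s
      have "h (z * c s) \<le> h zs"
        by (rule h_bound[OF hc c_inc c_dec c_zs]) (use that c_pos in \<open>simp add: less_imp_le\<close>)
      then have "kM dM T s * gfun dI tau tau' p s * h (z * c s) \<le> kM dM T s * gfun dI tau tau' p s * h zs"
        using kT_pos g_nn by (simp add: mult_left_mono less_imp_le)
      then show "F z s \<le> h zs * (kM dM T s * gfun dI tau tau' p s)" unfolding F_def by (simp add: ac_simps)
    qed
    also have "\<dots> = h zs * B" unfolding B_def by simp
    finally show ?thesis unfolding Q_eq by simp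
  qed
  have Q_low: "z * k + h z * W \<le> Q z" if "z \<ge> 0" for z
  proof -
    have "integral {t\<^sub>\<alpha>..t\<^sub>\<beta>} (\<lambda>s. h z * w s) \<le> integral {t\<^sub>\<alpha>..t\<^sub>\<beta>} (F z)"
    proof (rule integral_le[OF _ Fi[OF that]])
      show "(\<lambda>s. h z * w s) integrable_on {t\<^sub>\<alpha>..t\<^sub>\<beta>}" using integrable_on_cmult_left[OF wi, of "h z"] by simp
      fix s assume s: "s \<in> {t\<^sub>\<alpha>..t\<^sub>\<beta>}"
      have "c s * h z \<le> h (c s * z)"
        using d_subhom[rule_format, of z "c s"] that c_pos c_lt1 s by auto
      then have "kM dM T s * gfun dI tau tau' p s * (c s * h z) \<le> kM dM T s * gfun dI tau tau' p s * h (c s * z)"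
        using kT_pos g_nn by (simp add: mult_left_mono less_imp_le)
      then show "h z * w s \<le> F z s" unfolding F_def w_def by (simp add: ac_simps)
    qed
    also have "integral {t\<^sub>\<alpha>..t\<^sub>\<beta>} (\<lambda>s. h z * w s) = h z * W" unfolding W_def by simp
    finally show ?thesis unfolding Q_eq by simp
  qed
  show ?thesis
  proof (intro conjI impI)
    assume L: "Lnum dM dI tau tau' p (h' 0) T t\<^sub>\<alpha> t\<^sub>\<beta> < 1"
    then have r1: "k + h' 0 * W < 1" unfolding L_eq using k1 by (simp add: field_simps)
    have "\<forall>z\<ge>0. 0 \<le> Q z \<and> Q z \<le> (k + h' 0 * W) * z" using Q_nn Q_up1 by auto
    moreover have "0 \<le> k + h' 0 * W" using k0 h0_nn W_nn by simp
    ultimately show "\<forall>u\<ge>0. (\<lambda>n. (Qbar dM dI tau tau' p h T t\<^sub>\<alpha> t\<^sub>\<beta> ^^ n) u) \<longlonglongrightarrow> 0"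
      using iter_to_zero[of Q _ ] r1 unfolding Q_def by blast
  next
    assume L: "Lnum dM dI tau tau' p (h' 0) T t\<^sub>\<alpha> t\<^sub>\<beta> > 1"
    then have r1: "k + h' 0 * W > 1" unfolding L_eq using k1 by (simp add: field_simps)
    have Wp: "W > 0"
    proof (rule ccontr)
      assume "\<not> W > 0" then have "W = 0" using W_nn by simp
      then show False using r1 k1 by simp
    qed
    define A where "A = (1 - k) / W"
    have A: "A < h' 0" unfolding A_def using r1 Wp by (simp add: field_simps)
    obtain \<delta> where d: "\<delta> > 0" "h \<delta> / \<delta> > A" using h_small[OF h_deriv c_h0 A] by blast
    have small: "\<forall>z. 0 < z \<and> z \<le> \<delta> \<longrightarrow> Q z > z"
    proof (intro allI impI)
      fix z assume z: "0 < z \<and> z \<le> \<delta>"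
      have "h z / z \<ge> h \<delta> / \<delta>" using h_ratio_mono[OF d_subhom] z by blast
      then have "h z / z > A" using d by simp
      then have "h z > A * z" using z by (simp add: field_simps)
      then have "h z * W > A * z * W" using Wp by simp
      moreover have "A * z * W = (1 - k) * z" unfolding A_def using Wp by simp
      ultimately have "z * k + h z * W > z" by (simp add: algebra_simps)
      then show "Q z > z" using Q_low[of z] z by simp
    qed
    define z1 where "z1 = (h zs * B + 1) / (1 - k)"
    have hzs: "0 \<le> h zs" using h_nonneg c_zs by simp
    have z1p: "z1 > 0" unfolding z1_def using hzs B_nn k1 by (intro divide_pos_pos add_nonneg_pos mult_nonneg_nonneg) auto
    have "Q z1 \<le> z1 * k + h zs * B" using Q_up2 z1p by simp
    also have "\<dots> < z1"
    proof -
      have e: "z1 * (1 - k) = h zs * B + 1" unfolding z1_def using k1 by simp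
      then show ?thesis by (simp add: algebra_simps)
    qed
    finally have z1l: "Q z1 < z1" .
    obtain us where us: "us > 0" "Q us = us" "\<forall>v>0. Q v = v \<longrightarrow> us \<le> v"
      "\<forall>z. 0<z \<and> z<us \<longrightarrow> Q z > z"
      using fixpoint_exist[OF Qc d(1) small z1p z1l] by blast
    have conv: "(\<lambda>n. (Q ^^ n) u) \<longlonglongrightarrow> us" if u: "0 < u" "u \<le> us" "us * kM dM \<alpha> 0 \<le> zs" for u
    proof (rule conv_to_us[OF Qc us(1,2,4) _ u(1,2)])
      show "\<forall>x y. 0 \<le> x \<and> x \<le> y \<and> y \<le> us \<longrightarrow> Q x \<le> Q y"
      proof (intro allI impI)
        fix x y assume xy: "0 \<le> x \<and> x \<le> y \<and> y \<le> us"
        have "integral {t\<^sub>\<alpha>..t\<^sub>\<beta>} (F x) \<le> integral {t\<^sub>\<alpha>..t\<^sub>\<beta>} (F y)"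
        proof (rule integral_le[OF Fi Fi])
          fix s assume s: "s \<in> {t\<^sub>\<alpha>..t\<^sub>\<beta>}"
          have cs: "0 < c s" "c s \<le> kM dM \<alpha> 0" using c_pos c_le_alpha s by auto
          have "y * c s \<le> us * kM dM \<alpha> 0"
            using cs xy by (meson mult_mono less_imp_le order_trans)
          then have "h (x * c s) \<le> h (y * c s)"
            using h_mono_le[OF hc c_inc, of "x * c s" "y * c s"] cs xy u(3)
            by (simp add: mult_right_mono less_imp_le)
          then show "F x s \<le> F y s" unfolding F_def
            using kT_pos g_nn by (simp add: mult_left_mono less_imp_le)
        qed (use xy in auto)
        then show "Q x \<le> Q y" unfolding Q_eq using xy k0 by (simp add: add_mono mult_right_mono)
      qed
    qed
    show "\<exists>ustar>0. Qbar dM dI tau tau' p h T t\<^sub>\<alpha> t\<^sub>\<beta> ustar = ustar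
               \<and> (\<forall>v>0. Qbar dM dI tau tau' p h T t\<^sub>\<alpha> t\<^sub>\<beta> v = v \<longrightarrow> ustar \<le> v)
               \<and> (\<forall>u. 0 < u \<and> u \<le> ustar \<and> ustar * kM dM \<alpha> 0 \<le> zs \<longrightarrow>
                    (\<lambda>n. (Qbar dM dI tau tau' p h T t\<^sub>\<alpha> t\<^sub>\<beta> ^^ n) u) \<longlonglongrightarrow> ustar)"
      using us conv unfolding Q_def by blast
  qed
qed


end
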